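(* If TDS is decidable, then for every integer $k>2$ the membership problem of the middle-$k$th Cantor set (given a rational $t\in[0,1]$, decide whether $t$ belongs to the middle-$k$th Cantor set) is decidable.
   Context: An instance of TDS consists of a rational discount factor $0<\lambda<1$, a rational target $t$, and rational weights $a,b$; it asks whether there exists $w\in\{a,b\}^\omega$ with $\sum_{i=0}^\infty w(i)\lambda^i=t$. For an integer $k>2$, the middle-$k$th Cantor set is obtained by starting with $[0,1]$ and, at each step, removing from each remaining closed interval the open middle subinterval whose length is $\frac1k$ of that interval's length (leaving two closed intervals each of relative length $\frac{k-1}{2k}$); the set is the intersection of all stages. *)

theory Defs
  imports Complex_Main "HOL-Library.Nat_Bijection"
begin

datatype recf = Zero | Succ | Proj nat | Comp recf "recf list" | Prim recf recf | Mn recf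

inductive eval :: "recf \<Rightarrow> nat list \<Rightarrow> nat \<Rightarrow> bool" where
  zero: "eval Zero xs 0"
| succ: "eval Succ xs (Suc (hd xs))"
| proj: "eval (Proj i) xs (xs ! i)"
| comp: "list_all2 (\<lambda>g z. eval g xs z) gs zs \<Longrightarrow> eval f zs y \<Longrightarrow> eval (Comp f gs) xs y"
| prim0: "eval f xs y \<Longrightarrow> eval (Prim f g) (0 # xs) y"
| primS: "eval (Prim f g) (n # xs) r \<Longrightarrow> eval g (n # r # xs) y \<Longrightarrow> eval (Prim f g) (Suc n # xs) y"
| mn: "eval f (n # xs) 0 \<Longrightarrow> (\<forall>m<n. \<exists>y. eval f (m # xs) y \<and> y > 0) \<Longrightarrow> eval (Mn f) xs n"

definition rat_code :: "rat \<Rightarrow> nat" where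
  "rat_code r = (case quotient_of r of (p, q) \<Rightarrow> prod_encode (int_encode p, nat q))"

definition decidable_on :: "'a set \<Rightarrow> ('a \<Rightarrow> nat) \<Rightarrow> ('a \<Rightarrow> bool) \<Rightarrow> bool" where
  "decidable_on I enc P \<longleftrightarrow> (\<exists>f. \<forall>x\<in>I. eval f [enc x] (if P x then 1 else 0))"

definition tds_instances :: "(rat \<times> rat \<times> rat \<times> rat) set" where
  "tds_instances = {(l, t, a, b). 0 < l \<and> l < 1}"

definition tds_code :: "rat \<times> rat \<times> rat \<times> rat \<Rightarrow> nat" where
  "tds_code = (\<lambda>(l, t, a, b). prod_encode (rat_code l, prod_encode (rat_code t,
                  prod_encode (rat_code a, rat_code b))))"

definition tds_yes :: "rat \<times> rat \<times> rat \<times> rat \<Rightarrow> bool" where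
  "tds_yes = (\<lambda>(l, t, a, b). \<exists>w :: nat \<Rightarrow> rat. (\<forall>i. w i \<in> {a, b}) \<and>
                  (\<lambda>i. real_of_rat (w i) * real_of_rat l ^ i) sums real_of_rat t)"

definition TDS_decidable :: bool where
  "TDS_decidable \<longleftrightarrow> decidable_on tds_instances tds_code tds_yes"

fun cantor_stage :: "nat \<Rightarrow> nat \<Rightarrow> (real \<times> real) set" where
  "cantor_stage k 0 = {(0, 1)}"
| "cantor_stage k (Suc n) = (\<Union>(a, b)\<in>cantor_stage k n.
      {(a, a + (b - a) * ((real k - 1) / (2 * real k))),
       (b - (b - a) * ((real k - 1) / (2 * real k)), b)})"

definition middle_kth_cantor :: "nat \<Rightarrow> real set" where
  "middle_kth_cantor k = (\<Inter>n. \<Union>(a, b)\<in>cantor_stage k n. {a..b})"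

definition cantor_membership_decidable :: "nat \<Rightarrow> bool" where
  "cantor_membership_decidable k \<longleftrightarrow>
     decidable_on {t :: rat. 0 \<le> t \<and> t \<le> 1} rat_code
       (\<lambda>t. real_of_rat t \<in> middle_kth_cantor k)"

end

theory Submission imports Defs begin

primrec cst :: "nat \<Rightarrow> recf" where
  "cst 0 = Zero"
| "cst (Suc n) = Comp Succ [cst n]"

lemma eval_comp1: "eval g xs z \<Longrightarrow> eval f [z] y \<Longrightarrow> eval (Comp f [g]) xs y"
  by (rule eval.comp) auto

lemma eval_comp2: "eval g1 xs z1 \<Longrightarrow> eval g2 xs z2 \<Longrightarrow> eval f [z1, z2] y \<Longrightarrow> eval (Comp f [g1, g2]) xs y"
  by (rule eval.comp) auto

lemma eval_proj: "xs ! i = v \<Longrightarrow> eval (Proj i) xs v"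
  using eval.proj[of i xs] by simp

lemma eval_succ: "eval Succ [n] (Suc n)"
  using eval.succ[of "[n]"] by simp

lemma eval_cst: "eval (cst c) xs c"
  by (induction c) (auto intro: eval_comp1 eval_succ eval.zero)

definition addf :: recf where "addf = Prim (Proj 0) (Comp Succ [Proj 1])"

lemma eval_add: "eval addf [n, m] (n + m)"
proof (induction n)
  case 0
  then show ?case unfolding addf_def by (auto intro!: eval.prim0 eval_proj)
next
  case (Suc n)
  show ?case unfolding addf_def
    apply (rule eval.primS[OF Suc[unfolded addf_def]])
    by (auto intro!: eval_comp1 eval_proj eval_succ)
qed

definition trif :: recf where "trif = Prim Zero (Comp addf [Proj 1, Comp Succ [Proj 0]])"

lemma eval_tri: "eval trif [n] (triangle n)"
proof (induction n)
  case 0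
  then show ?case unfolding trif_def by (auto intro!: eval.prim0 eval.zero)
next
  case (Suc n)
  have "eval trif [Suc n] (triangle n + Suc n)" unfolding trif_def
    apply (rule eval.primS[OF Suc[unfolded trif_def]])
    using eval_add[of "triangle n" "Suc n"]
    by (auto intro!: eval_comp2 eval_comp1 eval_proj eval_succ)
  then show ?case by simp
qed

definition pef :: recf where "pef = Comp addf [Comp trif [Comp addf [Proj 0, Proj 1]], Proj 0]"

lemma eval_pe: "eval pef [m, n] (prod_encode (m, n))"
  unfolding pef_def prod_encode_def
  by (auto intro!: eval_comp2 eval_comp1 eval_proj eval_tri eval_add)

definition redf :: "nat \<Rightarrow> nat \<Rightarrow> recf" where
  "redf c1 c2 = Comp pef [cst c1, Comp pef [Proj 0, cst c2]]"

lemma eval_red: "eval (redf c1 c2) [x] (prod_encode (c1, prod_encode (x, c2)))"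
  unfolding redf_def
  by (auto intro!: eval_comp2 eval_proj eval_cst eval_pe)


definition Aset :: "real \<Rightarrow> nat \<Rightarrow> real set" where
  "Aset L n = {\<Sum>i<n. d i * L^i | d. \<forall>i. d i \<in> {0, 1-L}}"

definition Uset :: "real \<Rightarrow> nat \<Rightarrow> real \<Rightarrow> bool" where
  "Uset L n t \<longleftrightarrow> (\<exists>a\<in>Aset L n. a \<le> t \<and> t \<le> a + L^n)"

lemma Aset_0: "Aset L 0 = {0}"
  unfolding Aset_def by (auto intro!: exI[of _ "\<lambda>_. 0"])

lemma Aset_Suc_last: "Aset L (Suc n) = (\<Union>a\<in>Aset L n. {a, a + (1-L) * L^n})"
proof (intro set_eqI iffI)
  fix x assume "x \<in> Aset L (Suc n)"
  then obtain d where d: "\<forall>i. d i \<in> {0, 1-L}" "x = (\<Sum>i<Suc n. d i * L^i)"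
    unfolding Aset_def by blast
  have a: "(\<Sum>i<n. d i * L^i) \<in> Aset L n" using d(1) unfolding Aset_def by blast
  have "x = (\<Sum>i<n. d i * L^i) + d n * L^n" using d(2) by simp
  then show "x \<in> (\<Union>a\<in>Aset L n. {a, a + (1-L) * L^n})" using a d(1)[rule_format, of n] by auto
next
  fix x assume "x \<in> (\<Union>a\<in>Aset L n. {a, a + (1-L) * L^n})"
  then obtain a where a: "a \<in> Aset L n" "x = a + 0 * L^n \<or> x = a + (1-L) * L^n" by auto
  then obtain c where ac: "a \<in> Aset L n" "c \<in> {0, 1-L}" "x = a + c * L^n" by blast
  then obtain d where d: "\<forall>i. d i \<in> {0, 1-L}" "c \<in> {0, 1-L}" "x = (\<Sum>i<n. d i * L^i) + c * L^n"
    unfolding Aset_def by auto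
  define d' where "d' = d(n := c)"
  have "(\<Sum>i<n. d' i * L^i) = (\<Sum>i<n. d i * L^i)" unfolding d'_def by (intro sum.cong) auto
  then have "x = (\<Sum>i<Suc n. d' i * L^i)" using d(3) by (simp add: d'_def)
  moreover have "\<forall>i. d' i \<in> {0, 1-L}" using d unfolding d'_def by auto
  ultimately show "x \<in> Aset L (Suc n)" unfolding Aset_def by blast
qed

lemma Aset_Suc_first: "Aset L (Suc n) = (\<Union>c\<in>{0, 1-L}. (\<lambda>a. c + L * a) ` Aset L n)"
proof (intro set_eqI iffI)
  fix x assume "x \<in> Aset L (Suc n)"
  then obtain d where d: "\<forall>i. d i \<in> {0, 1-L}" "x = (\<Sum>i<Suc n. d i * L^i)"
    unfolding Aset_def by blast
  have a: "(\<Sum>i<n. d (Suc i) * L^i) \<in> Aset L n" unfolding Aset_def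
    by (rule CollectI, rule exI[of _ "\<lambda>i. d (Suc i)"]) (use d(1) in auto)
  have "x = d 0 + L * (\<Sum>i<n. d (Suc i) * L^i)" using d(2)
    by (simp only: sum.lessThan_Suc_shift) (simp add: sum_distrib_left algebra_simps)
  then show "x \<in> (\<Union>c\<in>{0, 1-L}. (\<lambda>a. c + L * a) ` Aset L n)" using a d(1)[rule_format, of 0] by auto
next
  fix x assume "x \<in> (\<Union>c\<in>{0, 1-L}. (\<lambda>a. c + L * a) ` Aset L n)"
  then obtain a c where ac: "a \<in> Aset L n" "c \<in> {0, 1-L}" "x = c + L * a"
    by (metis (no_types, lifting) UN_E image_iff)
  then obtain d where d: "\<forall>i. d i \<in> {0, 1-L}" "c \<in> {0, 1-L}" "x = c + L * (\<Sum>i<n. d i * L^i)"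
    unfolding Aset_def by auto
  define d' where "d' = case_nat c d"
  have "x = (\<Sum>i<Suc n. d' i * L^i)" using d(3)
    by (simp only: sum.lessThan_Suc_shift) (simp add: d'_def sum_distrib_left algebra_simps)
  moreover have "\<forall>i. d' i \<in> {0, 1-L}" using d unfolding d'_def by (auto split: nat.split)
  ultimately show "x \<in> Aset L (Suc n)" unfolding Aset_def by blast
qed

lemma stage:
  assumes L: "L = (real k - 1) / (2 * real k)"
  shows "cantor_stage k n = (\<lambda>a. (a, a + L^n)) ` Aset L n"
proof (induction n)
  case 0
  then show ?case by (simp add: Aset_0)
next
  case (Suc n)
  have e: "\<And>a. {(a, a + (a + L^n - a) * L), (a + L^n - (a + L^n - a) * L, a + L^n)}
     = {(a, a + L^Suc n), (a + (1-L) * L^n, a + (1-L) * L^n + L^Suc n)}"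
    by (auto simp: algebra_simps)
  have "cantor_stage k (Suc n) = (\<Union>a\<in>Aset L n. {(a, a + (a + L^n - a) * L), (a + L^n - (a + L^n - a) * L, a + L^n)})"
    using Suc by (simp add: L[symmetric])
  also have "\<dots> = (\<Union>a\<in>Aset L n. {(a, a + L^Suc n), (a + (1-L) * L^n, a + (1-L) * L^n + L^Suc n)})"
    using e by simp
  also have "\<dots> = (\<lambda>a. (a, a + L^Suc n)) ` Aset L (Suc n)"
    unfolding Aset_Suc_last by auto
  finally show ?case .
qed

lemma cantor_Uset:
  assumes L: "L = (real k - 1) / (2 * real k)"
  shows "t \<in> middle_kth_cantor k \<longleftrightarrow> (\<forall>n. Uset L n t)"
  unfolding middle_kth_cantor_def stage[OF L] Uset_def by auto

lemma Uset_Suc: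
  assumes "0 < L" "L < 1"
  shows "Uset L (Suc n) t \<longleftrightarrow> Uset L n (t / L) \<or> Uset L n ((t - (1 - L)) / L)"
proof -
  have 1: "(c + L * a \<le> t \<and> t \<le> c + L * a + L ^ Suc n) \<longleftrightarrow> (a \<le> (t - c) / L \<and> (t - c) / L \<le> a + L^n)" for a c
    using assms by (auto simp: field_simps)
  show ?thesis
    unfolding Uset_def Aset_Suc_first using 1[of 0] 1[of "1-L"] by auto
qed

lemma Uset_range:
  assumes "0 < L" "L < 1"
  shows "Uset L n t \<Longrightarrow> 0 \<le> t \<and> t \<le> 1"
proof (induction n arbitrary: t)
  case 0
  then show ?case by (simp add: Uset_def Aset_0)
next
  case (Suc n)
  then consider "Uset L n (t / L)" | "Uset L n ((t - (1 - L)) / L)" using Uset_Suc[OF assms] by blast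
  then show ?case
  proof cases
    case 1
    then show ?thesis using Suc.IH[of "t/L"] assms by (auto simp: field_simps)
  next
    case 2
    then show ?thesis using Suc.IH[of "(t - (1 - L)) / L"] assms by (auto simp: field_simps)
  qed
qed

lemma C_step:
  assumes "0 < L" "L < 1/2" "\<forall>n. Uset L n t"
  shows "(t \<le> L \<and> (\<forall>n. Uset L n (t / L))) \<or> (t > L \<and> (\<forall>n. Uset L n ((t - (1 - L)) / L)))"
proof -
  have L1: "L < 1" using assms by simp
  have A: "Uset L n (t / L) \<Longrightarrow> t \<le> L" for n using Uset_range[OF assms(1) L1, of n "t/L"] assms(1)
    by (auto simp: field_simps)
  have B: "Uset L n ((t - (1 - L)) / L) \<Longrightarrow> t \<ge> 1 - L" for n
    using Uset_range[OF assms(1) L1, of n "(t - (1 - L)) / L"] assms(1)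
    by (auto simp: field_simps)
  have S: "Uset L n (t / L) \<or> Uset L n ((t - (1 - L)) / L)" for n
    using assms(3) Uset_Suc[OF assms(1) L1, of n t] by blast
  show ?thesis
  proof (cases "t \<le> L")
    case True
    then have "Uset L n (t / L)" for n using S[of n] B[of n] assms(2) by force
    then show ?thesis using True by blast
  next
    case False
    then have "Uset L n ((t - (1 - L)) / L)" for n using S[of n] A[of n] by force
    then show ?thesis using False by auto
  qed
qed

definition stepf :: "real \<Rightarrow> real \<Rightarrow> real" where
  "stepf L y = (if y \<le> L then y / L else (y - (1 - L)) / L)"
definition digf :: "real \<Rightarrow> real \<Rightarrow> real" where
  "digf L y = (if y \<le> L then 0 else 1 - L)"

lemma C_to_sums:
  assumes "0 < L" "L < 1/2" "\<forall>n. Uset L n t"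
  shows "\<exists>w. (\<forall>i. w i \<in> {0, 1-L}) \<and> (\<lambda>i. w i * L^i) sums t"
proof -
  have L1: "L < 1" using assms by simp
  define x where "x n = (stepf L ^^ n) t" for n
  have xS: "x (Suc n) = stepf L (x n)" for n unfolding x_def by simp
  have C: "\<forall>m. Uset L m (x n)" for n
  proof (induction n)
    case 0 then show ?case using assms(3) by (simp add: x_def)
  next
    case (Suc n)
    then show ?case using C_step[OF assms(1,2) Suc] unfolding xS stepf_def by auto
  qed
  have rng: "0 \<le> x n \<and> x n \<le> 1" for n using C[of n] Uset_range[OF assms(1) L1, of 0 "x n"] by blast
  have dec: "y = digf L y + L * stepf L y" for y using assms(1) by (auto simp: digf_def stepf_def field_simps)
  have id: "t = (\<Sum>i<n. digf L (x i) * L^i) + L^n * x n" for n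
  proof (induction n)
    case 0 then show ?case by (simp add: x_def)
  next
    case (Suc n)
    have "L^n * x n = L^n * (digf L (x n) + L * stepf L (x n))"
      by (rule arg_cong[where f="\<lambda>y. L^n * y"]) (rule dec)
    also have "\<dots> = L^n * digf L (x n) + L^Suc n * x (Suc n)"
      unfolding xS by (simp add: algebra_simps)
    finally have "L^n * x n = L^n * digf L (x n) + L^Suc n * x (Suc n)" .
    then show ?case using Suc by (simp add: algebra_simps)
  qed
  have z: "(\<lambda>n. L^n * x n) \<longlonglongrightarrow> 0"
  proof (rule tendsto_0_le[OF LIMSEQ_power_zero[of L], where K=1])
    show "\<forall>\<^sub>F n in sequentially. norm (L ^ n * x n) \<le> norm (L ^ n) * 1"
    proof (intro always_eventually allI)
      fix n
      have "\<bar>x n\<bar> \<le> 1" using rng[of n] by simp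
      moreover have "0 \<le> \<bar>L ^ n\<bar>" by simp
      ultimately show "norm (L ^ n * x n) \<le> norm (L ^ n) * 1"
        unfolding real_norm_def abs_mult by (rule mult_left_mono)
    qed
    show "norm L < 1" using assms by simp
  qed
  have "(\<lambda>n. (\<Sum>i<n. digf L (x i) * L^i)) \<longlonglongrightarrow> t"
  proof -
    have "(\<lambda>n. t - L^n * x n) \<longlonglongrightarrow> t - 0" by (rule tendsto_diff[OF tendsto_const z])
    moreover have "(\<lambda>n. t - L^n * x n) = (\<lambda>n. (\<Sum>i<n. digf L (x i) * L^i))"
    proof (rule ext)
      fix n show "t - L^n * x n = (\<Sum>i<n. digf L (x i) * L^i)" using id[of n] by linarith
    qed
    ultimately show ?thesis by simp
  qed
  then have "(\<lambda>i. digf L (x i) * L^i) sums t" unfolding sums_def .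
  moreover have "\<forall>i. digf L (x i) \<in> {0, 1-L}" by (simp add: digf_def)
  ultimately show ?thesis by (intro exI[of _ "\<lambda>i. digf L (x i)"] conjI)
qed

lemma sums_to_C:
  assumes "0 < L" "L < 1" "\<forall>i. w i \<in> {0, 1-L}" "(\<lambda>i. w i * L^i) sums t"
  shows "Uset L n t"
proof -
  define a where "a = (\<Sum>i<n. w i * L^i)"
  have aA: "a \<in> Aset L n" unfolding Aset_def a_def using assms(3) by blast
  have tail: "(\<lambda>i. w (i + n) * L^(i + n)) sums (t - a)"
    using sums_iff_shift[of "\<lambda>i. w i * L^i" n "t - a"] assms(4) unfolding a_def by simp
  have g: "(\<lambda>i. (1 - L) * L^n * L^i) sums ((1 - L) * L^n * (1 / (1 - L)))"
    by (intro sums_mult geometric_sums) (use assms in simp)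
  have e1: "(1 - L) * L^n * (1 / (1 - L)) = L^n" using assms by simp
  have e2: "(\<lambda>i. (1 - L) * L^n * L^i) = (\<lambda>i. (1 - L) * L^(i + n))" by (simp add: power_add mult_ac)
  have g': "(\<lambda>i. (1 - L) * L^(i + n)) sums (L^n)"
    using g unfolding e1 e2 .
  have le1: "t - a \<le> L^n"
  proof (rule sums_le[OF _ tail g'])
    fix i show "w (i + n) * L ^ (i + n) \<le> (1 - L) * L ^ (i + n)"
      using assms(1,2) assms(3)[rule_format, of "i+n"] by auto
  qed
  have le0: "0 \<le> t - a"
  proof (rule sums_le[OF _ sums_zero tail])
    fix i show "0 \<le> w (i + n) * L ^ (i + n)"
      using assms(1,2) assms(3)[rule_format, of "i+n"] by auto
  qed
  show ?thesis unfolding Uset_def using aA le0 le1 by (intro bexI[of _ a]) auto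
qed


lemma key:
  fixes k :: nat and t :: rat
  assumes "k > 2"
  defines "lr \<equiv> (of_nat k - 1) / (2 * of_nat k) :: rat"
  shows "tds_yes (lr, t, 0, 1 - lr) \<longleftrightarrow> real_of_rat t \<in> middle_kth_cantor k"
proof -
  define L where "L = (real k - 1) / (2 * real k)"
  have Lr: "real_of_rat lr = L" unfolding lr_def L_def
    by (simp add: of_rat_divide of_rat_diff of_rat_mult)
  have L0: "0 < L" "L < 1/2" "L < 1" using assms(1) unfolding L_def by (auto simp: field_simps)
  show ?thesis
  proof
    assume "tds_yes (lr, t, 0, 1 - lr)"
    then obtain w :: "nat \<Rightarrow> rat" where w: "\<forall>i. w i \<in> {0, 1 - lr}"
      "(\<lambda>i. real_of_rat (w i) * real_of_rat lr ^ i) sums real_of_rat t"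
      unfolding tds_yes_def by auto
    have "\<forall>i. real_of_rat (w i) \<in> {0, 1 - L}" using w(1) Lr by (auto simp: of_rat_diff)
    then have "Uset L n (real_of_rat t)" for n using sums_to_C[OF L0(1,3) _ w(2)[unfolded Lr]] by blast
    then show "real_of_rat t \<in> middle_kth_cantor k" using cantor_Uset[OF L_def] by blast
  next
    assume "real_of_rat t \<in> middle_kth_cantor k"
    then have "\<forall>n. Uset L n (real_of_rat t)" using cantor_Uset[OF L_def] by blast
    then obtain w where w: "\<forall>i. w i \<in> {0, 1-L}" "(\<lambda>i. w i * L^i) sums real_of_rat t"
      using C_to_sums[OF L0(1,2)] by blast
    define wr where "wr i = (if w i = 0 then 0 else 1 - lr)" for i
    have e: "real_of_rat (wr i) = w i" for i using w(1)[rule_format, of i] Lr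
      by (auto simp: wr_def of_rat_diff)
    have "\<forall>i. wr i \<in> {0, 1 - lr}" by (simp add: wr_def)
    moreover have "(\<lambda>i. real_of_rat (wr i) * real_of_rat lr ^ i) sums real_of_rat t"
      unfolding e Lr by (rule w(2))
    ultimately show "tds_yes (lr, t, 0, 1 - lr)" unfolding tds_yes_def by auto
  qed
qed

theorem theorem34:
  assumes "TDS_decidable"
  shows "\<forall>k::nat. k > 2 \<longrightarrow> cantor_membership_decidable k"
proof (intro allI impI)
  fix k :: nat assume k: "k > 2"
  obtain f where f: "\<forall>x\<in>tds_instances. eval f [tds_code x] (if tds_yes x then 1 else 0)"
    using assms unfolding TDS_decidable_def decidable_on_def by blast
  define lr :: rat where "lr = (of_nat k - 1) / (2 * of_nat k)"
  have lr: "0 < lr" "lr < 1" using k unfolding lr_def by (auto simp: field_simps)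
  define g where "g = Comp f [redf (rat_code lr) (prod_encode (rat_code 0, rat_code (1 - lr)))]"
  have "eval g [rat_code t] (if real_of_rat t \<in> middle_kth_cantor k then 1 else 0)" for t
  proof -
    have inst: "(lr, t, 0, 1 - lr) \<in> tds_instances" using lr unfolding tds_instances_def by auto
    have c: "tds_code (lr, t, 0, 1 - lr) = prod_encode (rat_code lr, prod_encode (rat_code t, prod_encode (rat_code 0, rat_code (1 - lr))))"
      by (simp add: tds_code_def)
    have "eval f [tds_code (lr, t, 0, 1 - lr)] (if tds_yes (lr, t, 0, 1 - lr) then 1 else 0)"
      using f inst by blast
    then have "eval f [tds_code (lr, t, 0, 1 - lr)] (if real_of_rat t \<in> middle_kth_cantor k then 1 else 0)"
      using key[OF k, of t] unfolding lr_def by simp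
    then show ?thesis unfolding g_def c by (rule eval_comp1[OF eval_red])
  qed
  then show "cantor_membership_decidable k"
    unfolding cantor_membership_decidable_def decidable_on_def by blast
qed

end
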